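(* Let $M=M^T\in\mathbb{R}^{3\times3}$ be positive definite, let $m_0$ satisfy $\lambda_{\min}(M)\le m_0\le\lambda_{\max}(M)$, let $\lambda>0$, and let $K_r=K_r^T\in\mathbb{R}^{4\times4}$ be positive definite. For $q=[q_0,\vec q^{\,T}]^T\in\mathcal{S}^3$ and $\dot q\in\mathbb{R}^4$ with $q^T\dot q=0$ set $\omega=2J^T(q)\dot q$, $$D(q)=J(q)MJ^T(q)+m_0qq^T,\qquad C(q,\dot q)=-J(q)(M\omega)^{\wedge}J^T(q)-D(q)Q(\dot q)Q^T(q),$$ and $s(\bar g)=\dot q+\lambda(q_0q-\bar 1)$ for $\bar g=(q,\dot q)$, with $\bar 1=[1,0,0,0]^T$. Consider the Lagrangian system $D(q)\ddot q+C(q,\dot q)\dot q=\bar\tau$ with configuration manifold $\mathcal{S}^3$, in closed loop with $$\bar\tau=-\lambda\Big(D(q)\big(q_0\dot q+\dot q_0q\big)+C(q,\dot q)\big(q_0q-\bar 1\big)\Big)-K_r\,s(\bar g).$$ Then the equilibrium $s(\bar g)=0_{4\times1}$ is globally exponentially stable: there exist constants $k,\gamma>0$ such that every closed-loop solution $q:[t_0,\infty)\to\mathcal{S}^3$ satisfies $\|s(t)\|\le k\,\|s(t_0)\|\,e^{-\gamma(t-t_0)}$ for all $t\ge t_0$.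
   Context: Notation: for $u\in\mathbb{R}^3$, $u^{\wedge}$ is the skew-symmetric matrix with $u^{\wedge}v=u\times v$. For $x=[x_0,\vec x^{\,T}]^T\in\mathbb{R}^4$: $J(x)=\begin{bmatrix}-\vec x^{\,T}\\ x_0I_3+\vec x^{\wedge}\end{bmatrix}\in\mathbb{R}^{4\times3}$ and $Q(x)=\begin{bmatrix}x_0&-\vec x^{\,T}\\ \vec x& x_0I_3+\vec x^{\wedge}\end{bmatrix}$. $\dot q_0$ is the time derivative of the scalar part $q_0$. The Lagrangian system describes rigid-body rotational motion $\dot q=\tfrac12J(q)\omega$, $M\dot\omega=(M\omega)^\wedge\omega+\tau$ with $\bar\tau=\tfrac12J(q)\tau$; $\lambda_{\min}(M),\lambda_{\max}(M)$ are the extreme eigenvalues of $M$. *)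

theory Defs
  imports "HOL-Analysis.Analysis"
begin

text \<open>Vectors in R^4 are indexed 1..4 (component 1 is the scalar part x0);
vectors in R^3 are indexed 1..3. Matrices are lists of rows.\<close>

definition hat :: "real^3 \<Rightarrow> real^3^3" where
  "hat u = vector [vector [0, - u$3, u$2],
                   vector [u$3, 0, - u$1],
                   vector [- u$2, u$1, 0]]"

definition vpart :: "real^4 \<Rightarrow> real^3" where
  "vpart x = vector [x$2, x$3, x$4]"

definition Jm :: "real^4 \<Rightarrow> real^3^4" where
  "Jm x = vector [vector [- x$2, - x$3, - x$4],
                  vector [x$1, - x$4, x$3],
                  vector [x$4, x$1, - x$2],
                  vector [- x$3, x$2, x$1]]"

text \<open>Jm x = [- vpart x ^T ; x0 I3 + hat (vpart x)], written out entrywise.\<close>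

definition Qm :: "real^4 \<Rightarrow> real^4^4" where
  "Qm x = vector [vector [x$1, - x$2, - x$3, - x$4],
                  vector [x$2, x$1, - x$4, x$3],
                  vector [x$3, x$4, x$1, - x$2],
                  vector [x$4, - x$3, x$2, x$1]]"

text \<open>Qm x = [x0, - vpart x ^T ; vpart x, x0 I3 + hat (vpart x)], written out entrywise.\<close>

definition outer :: "real^4 \<Rightarrow> real^4 \<Rightarrow> real^4^4" where
  "outer a b = (\<chi> i j. a$i * b$j)"

definition pos_def_mat :: "real^'n^'n \<Rightarrow> bool" where
  "pos_def_mat A \<longleftrightarrow> transpose A = A \<and> (\<forall>x. x \<noteq> 0 \<longrightarrow> x \<bullet> (A *v x) > 0)"

definition eigvals :: "real^'n^'n \<Rightarrow> real set" where
  "eigvals A = {\<mu>. \<exists>v. v \<noteq> 0 \<and> A *v v = \<mu> *\<^sub>R v}"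

definition lambda_min :: "real^'n^'n \<Rightarrow> real" where
  "lambda_min A = Min (eigvals A)"

definition lambda_max :: "real^'n^'n \<Rightarrow> real" where
  "lambda_max A = Max (eigvals A)"

definition omega :: "real^4 \<Rightarrow> real^4 \<Rightarrow> real^3" where
  "omega q qd = 2 *\<^sub>R (transpose (Jm q) *v qd)"

definition Dm :: "real^3^3 \<Rightarrow> real \<Rightarrow> real^4 \<Rightarrow> real^4^4" where
  "Dm M m0 q = Jm q ** M ** transpose (Jm q) + m0 *\<^sub>R outer q q"

definition Cm :: "real^3^3 \<Rightarrow> real \<Rightarrow> real^4 \<Rightarrow> real^4 \<Rightarrow> real^4^4" where
  "Cm M m0 q qd = - (Jm q ** hat (M *v omega q qd) ** transpose (Jm q))
                  - Dm M m0 q ** Qm qd ** transpose (Qm q)"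

definition one4 :: "real^4" where
  "one4 = vector [1, 0, 0, 0]"

definition sfun :: "real \<Rightarrow> real^4 \<Rightarrow> real^4 \<Rightarrow> real^4" where
  "sfun lam q qd = qd + lam *\<^sub>R (q$1 *\<^sub>R q - one4)"

text \<open>Closed-loop torque; qd$1 is the time derivative of the scalar part q0.\<close>
definition tau_cl :: "real^3^3 \<Rightarrow> real \<Rightarrow> real \<Rightarrow> real^4^4 \<Rightarrow> real^4 \<Rightarrow> real^4 \<Rightarrow> real^4" where
  "tau_cl M m0 lam Kr q qd =
     - lam *\<^sub>R (Dm M m0 q *v (q$1 *\<^sub>R qd + qd$1 *\<^sub>R q) + Cm M m0 q qd *v (q$1 *\<^sub>R q - one4))
     - Kr *v sfun lam q qd"

definition closed_loop_solution ::
  "real^3^3 \<Rightarrow> real \<Rightarrow> real \<Rightarrow> real^4^4 \<Rightarrow> real \<Rightarrow> (real \<Rightarrow> real^4) \<Rightarrow> (real \<Rightarrow> real^4) \<Rightarrow> (real \<Rightarrow> real^4) \<Rightarrow> bool" where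
  "closed_loop_solution M m0 lam Kr t0 q qd qdd \<longleftrightarrow>
     (\<forall>t\<ge>t0. norm (q t) = 1
        \<and> (q has_vector_derivative qd t) (at t within {t0..})
        \<and> (qd has_vector_derivative qdd t) (at t within {t0..})
        \<and> Dm M m0 (q t) *v qdd t + Cm M m0 (q t) (qd t) *v qd t = tau_cl M m0 lam Kr (q t) (qd t))"

end

theory Submission
  imports Defs
begin

lemma vector_4 [simp]:
 "(vector [x,y,z,w] ::('a::zero)^4)$1 = x"
 "(vector [x,y,z,w] ::('a::zero)^4)$2 = y"
 "(vector [x,y,z,w] ::('a::zero)^4)$3 = z"
 "(vector [x,y,z,w] ::('a::zero)^4)$4 = w"
  unfolding vector_def by simp_all

lemma Jt_expl: "transpose (Jm x) *v y =
  vector [- x$2*y$1 + x$1*y$2 + x$4*y$3 - x$3*y$4,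
          - x$3*y$1 - x$4*y$2 + x$1*y$3 + x$2*y$4,
          - x$4*y$1 + x$3*y$2 - x$2*y$3 + x$1*y$4]"
  unfolding vec_eq_iff forall_3
  by (simp add: Jm_def matrix_vector_mult_def transpose_def sum_4 vector_def[symmetric])

lemma inner4: "(x::real^4) \<bullet> y = x$1*y$1 + x$2*y$2 + x$3*y$3 + x$4*y$4"
  by (simp add: inner_vec_def sum_4)
lemma inner3: "(x::real^3) \<bullet> y = x$1*y$1 + x$2*y$2 + x$3*y$3"
  by (simp add: inner_vec_def sum_3)

lemma dot_mv: "(x::real^'n) \<bullet> (A *v y) = (transpose A *v x) \<bullet> y"
  by (simp add: dot_lmul_matrix)

lemma outer_mv: "outer a b *v x = (b \<bullet> x) *\<^sub>R a"
  by (simp add: vec_eq_iff outer_def matrix_vector_mult_def inner_vec_def sum_distrib_left mult_ac)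

lemma L_D: "s \<bullet> (Dm M m0 q *v x) = m0*(q\<bullet>s)*(q\<bullet>x) + (transpose (Jm q) *v s) \<bullet> (M *v (transpose (Jm q) *v x))"
proof -
  have "s \<bullet> (Dm M m0 q *v x) = s \<bullet> (Jm q *v (M *v (transpose (Jm q) *v x))) + m0 * (s \<bullet> ((q\<bullet>x) *\<^sub>R q))"
    unfolding Dm_def
    by (simp add: matrix_vector_mult_add_rdistrib scaleR_matrix_vector_assoc[symmetric] outer_mv
        matrix_vector_mul_assoc matrix_mul_assoc inner_add_right del: transpose_matrix_vector)
  also have "\<dots> = (transpose (Jm q) *v s) \<bullet> (M *v (transpose (Jm q) *v x)) + m0*(q\<bullet>s)*(q\<bullet>x)"
    by (simp only: dot_mv) (simp add: inner_commute del: transpose_matrix_vector)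
  finally show ?thesis by simp
qed

lemma L_hat: "(y::real^3) \<bullet> (hat v *v y) = 0"
  by (simp add: hat_def inner3 matrix_vector_mult_def sum_3 algebra_simps)

lemma mv_neg: "(- A) *v (x::real^'n) = - (A *v x)"
  by (simp add: vec_eq_iff matrix_vector_mult_def sum_negf)

lemma mv_neg_r: "A *v (- x) = - (A *v (x::real^'n))"
  by (simp add: vec_eq_iff matrix_vector_mult_def sum_negf)

lemma L_C: "s \<bullet> (Cm M m0 q qd *v s) = - (s \<bullet> (Dm M m0 q *v (Qm qd *v (transpose (Qm q) *v s))))"
proof -
  have "s \<bullet> (Jm q *v (hat (M *v omega q qd) *v (transpose (Jm q) *v s))) = 0"
    by (simp only: dot_mv[of s] transpose_transpose L_hat)
  then show ?thesis unfolding Cm_def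
    by (simp add: matrix_vector_mult_diff_rdistrib matrix_vector_mul_assoc matrix_mul_assoc
     inner_diff_right mv_neg del: transpose_matrix_vector)
qed

lemma L_Q1: "q \<bullet> (Qm qd *v (transpose (Qm q) *v s)) = - (q\<bullet>q) * (qd\<bullet>s) + 2*(q\<bullet>qd)*(q\<bullet>s)"
  by (simp add: inner4 Qm_def matrix_vector_mult_def sum_4 transpose_def) algebra

lemma L_Q2: "transpose (Jm q) *v (Qm qd *v (transpose (Qm q) *v s)) = - (q\<bullet>q) *\<^sub>R (transpose (Jm qd) *v s) + (2*(q\<bullet>qd)) *\<^sub>R (transpose (Jm q) *v s)"
  unfolding Jt_expl vec_eq_iff forall_3
  by (simp add: inner4 Qm_def matrix_vector_mult_def sum_4 transpose_def) algebra

lemma L_norm: "(q\<bullet>s)^2 + (transpose (Jm q) *v s) \<bullet> (transpose (Jm q) *v s) = (q\<bullet>q)*(s\<bullet>s)"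
  unfolding Jt_expl by (simp add: inner4 inner3) algebra

lemma L_key:
  assumes qq: "q\<bullet>q = 1" and qqd: "q\<bullet>qd = 0" and Ms: "transpose M = M"
    and cl: "Dm M m0 q *v sd + Cm M m0 q qd *v s = - (Kr *v s)"
  shows "2*m0*(q\<bullet>s)*(q\<bullet>sd + qd\<bullet>s) + 2 * ((transpose (Jm q) *v s) \<bullet> (M *v (transpose (Jm q) *v sd + transpose (Jm qd) *v s))) = -2 * (s \<bullet> (Kr *v s))"
proof -
  let ?u = "transpose (Jm q) *v s"
  let ?w = "Qm qd *v (transpose (Qm q) *v s)"
  have 1: "s \<bullet> (Dm M m0 q *v sd) + s \<bullet> (Cm M m0 q qd *v s) = - (s \<bullet> (Kr *v s))"
    using arg_cong[OF cl, of "\<lambda>z. s \<bullet> z"] by (simp add: inner_add_right)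
  have 2: "s \<bullet> (Cm M m0 q qd *v s) = m0*(q\<bullet>s)*(qd\<bullet>s) + ?u \<bullet> (M *v (transpose (Jm qd) *v s))"
    unfolding L_C L_D L_Q1 L_Q2 qq qqd
    by (simp add: matrix_vector_mult_scaleR mv_neg_r inner_commute del: transpose_matrix_vector)
  have 3: "s \<bullet> (Dm M m0 q *v sd) = m0*(q\<bullet>s)*(q\<bullet>sd) + ?u \<bullet> (M *v (transpose (Jm q) *v sd))"
    by (rule L_D)
  show ?thesis using 1 2 3
    by (simp add: matrix_vector_right_distrib inner_add_right algebra_simps del: transpose_matrix_vector)
qed

lemma cl_s:
  assumes "Dm M m0 q *v qdd + Cm M m0 q qd *v qd = tau_cl M m0 lam Kr q qd"
  shows "Dm M m0 q *v (qdd + lam *\<^sub>R (qd$1 *\<^sub>R q + q$1 *\<^sub>R qd)) + Cm M m0 q qd *v sfun lam q qd = - (Kr *v sfun lam q qd)"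
  using assms unfolding tau_cl_def sfun_def
  by (simp add: matrix_vector_right_distrib matrix_vector_mult_scaleR matrix_vector_mult_diff_distrib algebra_simps)

lemma posdef_lower:
  fixes A :: "real^'n^'n"
  assumes "pos_def_mat A"
  shows "\<exists>c>0. \<forall>x. c * (x\<bullet>x) \<le> x \<bullet> (A *v x)"
proof -
  let ?S = "sphere (0::real^'n) 1"
  let ?f = "\<lambda>x. x \<bullet> (A *v x)"
  have "continuous_on ?S ?f"
    by (intro continuous_intros bounded_linear.continuous_on[OF matrix_vector_mul_bounded_linear])
  moreover have "?S \<noteq> {}" by simp
  ultimately obtain v where v: "v \<in> ?S" "\<And>y. y \<in> ?S \<Longrightarrow> ?f v \<le> ?f y"
    using continuous_attains_inf[of ?S ?f] by auto
  have "v \<noteq> 0" using v by auto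
  then have cpos: "?f v > 0" using assms unfolding pos_def_mat_def by auto
  have "?f v * (x\<bullet>x) \<le> ?f x" for x
  proof (cases "x = 0")
    case True then show ?thesis by simp
  next
    case False
    let ?y = "inverse (norm x) *\<^sub>R x"
    have "?y \<in> ?S" using False by simp
    then have "?f v \<le> ?f ?y" by (rule v)
    also have "?f ?y = ?f x / (norm x)^2"
      by (simp add: matrix_vector_mult_scaleR power2_eq_square field_simps)
    finally have "?f v * (norm x)^2 \<le> ?f x" using False by (simp add: field_simps)
    then show ?thesis by (simp add: power2_norm_eq_inner)
  qed
  then show ?thesis using cpos by blast
qed

lemma mat_upper:
  fixes A :: "real^'n^'n"
  shows "\<exists>K. \<forall>x. x \<bullet> (A *v x) \<le> K * (x\<bullet>x)"
proof -
  obtain K where K: "\<And>x. norm (A *v x) \<le> norm x * K"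
    using bounded_linear.bounded[OF matrix_vector_mul_bounded_linear[of A]] by blast
  have "x \<bullet> (A *v x) \<le> K * (x\<bullet>x)" for x
  proof -
    have "x \<bullet> (A *v x) \<le> norm x * norm (A *v x)" by (rule norm_cauchy_schwarz)
    also have "\<dots> \<le> norm x * (norm x * K)" by (rule mult_left_mono[OF K norm_ge_zero])
    also have "\<dots> = K * (x\<bullet>x)" by (simp add: power2_norm_eq_inner[symmetric] power2_eq_square)
    finally show ?thesis .
  qed
  then show ?thesis by blast
qed

lemma sym_dot: "transpose A = A \<Longrightarrow> (x::real^'n) \<bullet> (A *v y) = y \<bullet> (A *v x)"
  by (metis dot_mv inner_commute)

lemma eig_pos:
  fixes A :: "real^'n^'n"
  assumes "pos_def_mat A" "\<mu> \<in> eigvals A" shows "\<mu> > 0"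
proof -
  obtain v where v: "v \<noteq> 0" "A *v v = \<mu> *\<^sub>R v" using assms(2) unfolding eigvals_def by auto
  have "v \<bullet> (A *v v) > 0" using assms(1) v(1) unfolding pos_def_mat_def by auto
  then have "\<mu> * (v \<bullet> v) > 0" using v(2) by simp
  moreover have "v \<bullet> v > 0" using v(1) by simp
  ultimately show ?thesis by (simp add: zero_less_mult_iff)
qed

lemma eig_finite:
  fixes A :: "real^'n^'n"
  assumes Ms: "transpose A = A" shows "finite (eigvals A)"
proof -
  define g where "g \<mu> = (SOME v. v \<noteq> 0 \<and> A *v v = \<mu> *\<^sub>R v)" for \<mu>
  have g: "g \<mu> \<noteq> 0 \<and> A *v g \<mu> = \<mu> *\<^sub>R g \<mu>" if "\<mu> \<in> eigvals A" for \<mu>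
    using that unfolding eigvals_def g_def by (metis (mono_tags, lifting) mem_Collect_eq someI_ex)
  have inj: "inj_on g (eigvals A)"
  proof (rule inj_onI)
    fix a b assume ab: "a \<in> eigvals A" "b \<in> eigvals A" "g a = g b"
    then have "a *\<^sub>R g a = b *\<^sub>R g a" using g[OF ab(1)] g[OF ab(2)] by metis
    then show "a = b" using g[OF ab(1)] by simp
  qed
  have "pairwise orthogonal (g ` eigvals A)"
  proof (rule pairwiseI, clarify)
    fix a b assume ab: "a \<in> eigvals A" "b \<in> eigvals A" "g a \<noteq> g b"
    then have "a \<noteq> b" by auto
    have "a * (g a \<bullet> g b) = (A *v g a) \<bullet> g b" using g[OF ab(1)] by simp
    also have "\<dots> = g b \<bullet> (A *v g a)" by (simp add: inner_commute)
    also have "\<dots> = g a \<bullet> (A *v g b)" by (rule sym_dot[OF Ms])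
    also have "\<dots> = b * (g a \<bullet> g b)" using g[OF ab(2)] by simp
    finally have "(a - b) * (g a \<bullet> g b) = 0" by (simp add: algebra_simps)
    then show "orthogonal (g a) (g b)" using \<open>a \<noteq> b\<close> by (simp add: orthogonal_def)
  qed
  moreover have "0 \<notin> g ` eigvals A" using g by auto
  ultimately have "independent (g ` eigvals A)" by (rule pairwise_orthogonal_independent)
  then have "finite (g ` eigvals A)" using independent_bound by blast
  then show ?thesis using inj finite_imageD by blast
qed

lemma eig_nonempty:
  fixes A :: "real^'n^'n"
  assumes Ms: "transpose A = A" shows "eigvals A \<noteq> {}"
proof -
  let ?S = "sphere (0::real^'n) 1"
  let ?f = "\<lambda>x. x \<bullet> (A *v x)"
  have "continuous_on ?S ?f"
    by (intro continuous_intros bounded_linear.continuous_on[OF matrix_vector_mul_bounded_linear])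
  moreover have "?S \<noteq> {}" by simp
  ultimately obtain v where v: "v \<in> ?S" "\<And>y. y \<in> ?S \<Longrightarrow> ?f v \<le> ?f y"
    using continuous_attains_inf[of ?S ?f] by auto
  define \<mu> where "\<mu> = ?f v"
  have vv: "v \<bullet> v = 1" using v(1) by (simp add: dot_square_norm)
  have low: "\<mu> * (x\<bullet>x) \<le> ?f x" for x
  proof (cases "x = 0")
    case True then show ?thesis by simp
  next
    case False
    let ?y = "inverse (norm x) *\<^sub>R x"
    have "?y \<in> ?S" using False by simp
    then have "\<mu> \<le> ?f ?y" unfolding \<mu>_def by (rule v)
    also have "?f ?y = ?f x / (norm x)^2"
      by (simp add: matrix_vector_mult_scaleR power2_eq_square field_simps)
    finally have "\<mu> * (norm x)^2 \<le> ?f x" using False by (simp add: field_simps)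
    then show ?thesis by (simp add: power2_norm_eq_inner)
  qed
  define w where "w = A *v v - \<mu> *\<^sub>R v"
  define a where "a = w \<bullet> w"
  define c where "c = ?f w - \<mu> * a"
  have vw: "v \<bullet> w = 0" unfolding w_def \<mu>_def using vv by (simp add: inner_diff_right)
  have wAv: "w \<bullet> (A *v v) = a"
  proof -
    have e: "A *v v = w + \<mu> *\<^sub>R v" by (simp add: w_def)
    have "w \<bullet> v = 0" using vw by (simp add: inner_commute)
    then show ?thesis unfolding e a_def by (simp add: inner_add_right)
  qed
  have quad: "2*t*a + t^2 * c \<ge> 0" for t
  proof -
    have h1: "\<mu> * ((v + t *\<^sub>R w) \<bullet> (v + t *\<^sub>R w)) \<le> ?f (v + t *\<^sub>R w)" by (rule low)
    have h2: "(v + t *\<^sub>R w) \<bullet> (v + t *\<^sub>R w) = 1 + t^2 * a"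
      using vv vw unfolding a_def by (simp add: inner_add_left inner_add_right inner_commute power2_eq_square)
    have h3: "?f (v + t *\<^sub>R w) = \<mu> + 2*t*a + t^2 * ?f w"
    proof -
      have "v \<bullet> (A *v w) = a" using sym_dot[OF Ms, of v w] wAv by simp
      then show ?thesis using wAv unfolding \<mu>_def
        by (simp add: matrix_vector_right_distrib matrix_vector_mult_scaleR inner_add_left inner_add_right
              power2_eq_square algebra_simps del: transpose_matrix_vector)
    qed
    have "\<mu> * (1 + t^2*a) \<le> \<mu> + 2*t*a + t^2 * ?f w" using h1 unfolding h2 h3 .
    then show ?thesis unfolding c_def by (simp add: algebra_simps)
  qed
  have "a = 0"
  proof (rule ccontr)
    assume "a \<noteq> 0"
    then have apos: "a > 0" unfolding a_def by simp
    define d where "d = \<bar>c\<bar> + 1"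
    have dpos: "d > 0" unfolding d_def by simp
    have q1: "2*(-a/d)*a + (-a/d)^2 * c \<ge> 0" by (rule quad)
    have q2: "(2*(-a/d)*a + (-a/d)^2 * c) * d^2 = a^2 * (c - 2*d)"
      using dpos by (simp add: field_simps power2_eq_square)
    have q3: "c - 2*d < 0" unfolding d_def by (cases "c \<ge> 0") auto
    have q4: "a^2 > 0" using apos by simp
    have "0 \<le> (2*(-a/d)*a + (-a/d)^2 * c) * d^2" using q1 by simp
    moreover have "a^2 * (c - 2*d) < 0" by (rule mult_pos_neg[OF q4 q3])
    ultimately show False using q2 by linarith
  qed
  then have "A *v v = \<mu> *\<^sub>R v" unfolding a_def w_def by simp
  moreover have "v \<noteq> 0" using v(1) by auto
  ultimately show ?thesis unfolding eigvals_def by blast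
qed

lemma Jt_bb: "bounded_bilinear (\<lambda>x y. transpose (Jm x) *v (y::real^4))"
  unfolding bilinear_conv_bounded_bilinear[symmetric] bilinear_def
proof (intro conjI allI)
  fix x :: "real^4" show "linear (\<lambda>y. transpose (Jm x) *v y)" by (rule matrix_vector_mul_linear)
next
  fix y :: "real^4" show "linear (\<lambda>x. transpose (Jm x) *v y)"
    by (rule linearI) (simp_all add: Jt_expl vec_eq_iff forall_3 algebra_simps del: transpose_matrix_vector)
qed

lemma V_bounds:
  fixes M :: "real^3^3"
  assumes qq: "q\<bullet>q = 1" and low: "\<And>x. cM * (x\<bullet>x) \<le> x \<bullet> (M *v x)"
    and up: "\<And>x. x \<bullet> (M *v x) \<le> KM * (x\<bullet>x)" and m0: "m0 > 0" and cM: "cM > 0"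
  shows "min m0 cM * (s\<bullet>s) \<le> m0*(q\<bullet>s)^2 + (transpose (Jm q) *v s) \<bullet> (M *v (transpose (Jm q) *v s))"
    and "m0*(q\<bullet>s)^2 + (transpose (Jm q) *v s) \<bullet> (M *v (transpose (Jm q) *v s)) \<le> max m0 KM * (s\<bullet>s)"
proof -
  let ?u = "transpose (Jm q) *v s"
  have n: "(q\<bullet>s)^2 + ?u \<bullet> ?u = s\<bullet>s" using L_norm[of q s] qq by simp
  have a: "0 \<le> (q\<bullet>s)^2" "0 \<le> ?u \<bullet> ?u" by simp_all
  have "min m0 cM * (s\<bullet>s) = min m0 cM * (q\<bullet>s)^2 + min m0 cM * (?u \<bullet> ?u)" unfolding n[symmetric] by (simp only: ring_distribs)
  also have "\<dots> \<le> m0*(q\<bullet>s)^2 + cM * (?u \<bullet> ?u)"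
    by (intro add_mono mult_right_mono a) auto
  also have "\<dots> \<le> m0*(q\<bullet>s)^2 + ?u \<bullet> (M *v ?u)" using low[of ?u] by simp
  finally show "min m0 cM * (s\<bullet>s) \<le> m0*(q\<bullet>s)^2 + ?u \<bullet> (M *v ?u)" .
  have "m0*(q\<bullet>s)^2 + ?u \<bullet> (M *v ?u) \<le> m0*(q\<bullet>s)^2 + KM * (?u \<bullet> ?u)" using up[of ?u] by simp
  also have "\<dots> \<le> max m0 KM * (q\<bullet>s)^2 + max m0 KM * (?u \<bullet> ?u)"
    by (intro add_mono mult_right_mono a) auto
  also have "\<dots> = max m0 KM * (s\<bullet>s)" unfolding n[symmetric] by (simp only: ring_distribs)
  finally show "m0*(q\<bullet>s)^2 + ?u \<bullet> (M *v ?u) \<le> max m0 KM * (s\<bullet>s)" .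
qed

theorem lemma6:
  fixes M :: "real^3^3" and Kr :: "real^4^4" and m0 lam :: real
  assumes "pos_def_mat M"
    and "lambda_min M \<le> m0" and "m0 \<le> lambda_max M"
    and "lam > 0"
    and "pos_def_mat Kr"
  shows "\<exists>k \<gamma>. k > 0 \<and> \<gamma> > 0 \<and>
     (\<forall>t0 q qd qdd. closed_loop_solution M m0 lam Kr t0 q qd qdd \<longrightarrow>
        (\<forall>t\<ge>t0. norm (sfun lam (q t) (qd t))
                  \<le> k * norm (sfun lam (q t0) (qd t0)) * exp (- \<gamma> * (t - t0))))"
proof -
  have Ms: "transpose M = M" using assms(1) unfolding pos_def_mat_def by simp
  have "Min (eigvals M) \<in> eigvals M"
    using eig_finite[OF Ms] eig_nonempty[OF Ms] by (rule Min_in)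
  then have "lambda_min M > 0" unfolding lambda_min_def using eig_pos[OF assms(1)] by blast
  then have m0: "m0 > 0" using assms(2) by linarith
  obtain cM where cM: "cM > 0" "\<And>x. cM * (x\<bullet>x) \<le> x \<bullet> (M *v x)"
    using posdef_lower[OF assms(1)] by blast
  obtain KM where KM: "\<And>x. x \<bullet> (M *v x) \<le> KM * (x\<bullet>x)" using mat_upper by blast
  obtain kap where kap: "kap > 0" "\<And>x. kap * (x\<bullet>x) \<le> x \<bullet> (Kr *v x)"
    using posdef_lower[OF assms(5)] by blast
  define c1 where "c1 = min m0 cM"
  define c2 where "c2 = max m0 KM"
  have c1: "c1 > 0" unfolding c1_def using m0 cM by simp
  have c2: "c2 > 0" unfolding c2_def using m0 by simp
  define al where "al = 2*kap/c2"
  have al: "al > 0" unfolding al_def using kap c2 by simp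
  have main: "norm (sfun lam (q t) (qd t)) \<le> sqrt (c2/c1) * norm (sfun lam (q t0) (qd t0)) * exp (- (al/2) * (t - t0))"
    if cls: "closed_loop_solution M m0 lam Kr t0 q qd qdd" and tt0: "t \<ge> t0" for t0 q qd qdd t
  proof -
    define s where "s x = sfun lam (q x) (qd x)" for x
    define sd where "sd x = qdd x + lam *\<^sub>R (qd x$1 *\<^sub>R q x + q x$1 *\<^sub>R qd x)" for x
    define V where "V x = m0*(q x\<bullet>s x)^2 + (transpose (Jm (q x)) *v s x) \<bullet> (M *v (transpose (Jm (q x)) *v s x))" for x
    define Vd where "Vd x = 2*m0*(q x\<bullet>s x)*(q x\<bullet>sd x + qd x\<bullet>s x) + 2 * ((transpose (Jm (q x)) *v s x) \<bullet> (M *v (transpose (Jm (q x)) *v sd x + transpose (Jm (qd x)) *v s x)))" for x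
    let ?T = "{t0..}"
    have nq: "norm (q x) = 1" and qder: "(q has_vector_derivative qd x) (at x within ?T)"
      and qdder: "(qd has_vector_derivative qdd x) (at x within ?T)"
      and eq: "Dm M m0 (q x) *v qdd x + Cm M m0 (q x) (qd x) *v qd x = tau_cl M m0 lam Kr (q x) (qd x)"
      if "x \<ge> t0" for x
      using cls that unfolding closed_loop_solution_def by auto
    have qq: "q x \<bullet> q x = 1" if "x \<ge> t0" for x
      using nq[OF that] by (simp add: dot_square_norm)
    have qqd: "q x \<bullet> qd x = 0" if x: "x \<ge> t0" for x
    proof -
      have sub: "{x..x+1} \<subseteq> ?T" using x by auto
      have d1: "((\<lambda>y. q y \<bullet> q y) has_vector_derivative (q x \<bullet> qd x + qd x \<bullet> q x)) (at x within {x..x+1})"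
        by (rule has_vector_derivative_within_subset[OF bounded_bilinear.has_vector_derivative[OF bounded_bilinear_inner qder[OF x] qder[OF x]] sub])
      have d2: "((\<lambda>y. q y \<bullet> q y) has_vector_derivative 0) (at x within {x..x+1})"
      proof (rule has_vector_derivative_transform_within[OF has_vector_derivative_const[of 1]])
        show "0 < (1::real)" by simp
        show "x \<in> {x..x+1}" by simp
        show "\<And>y. y \<in> {x..x + 1} \<Longrightarrow> dist y x < 1 \<Longrightarrow> 1 = q y \<bullet> q y"
          using qq x by auto
      qed
      have "q x \<bullet> qd x + qd x \<bullet> q x = 0"
        using vector_derivative_unique_within_closed_interval[of x "x+1" x, OF _ _ d1[unfolded cbox_interval[symmetric]] d2[unfolded cbox_interval[symmetric]]]
        by simp
      then show ?thesis by (simp add: inner_commute)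
    qed
    have sder: "(s has_vector_derivative sd x) (at x within ?T)" if x: "x \<ge> t0" for x
    proof -
      have c1d: "((\<lambda>y. q y $ 1) has_real_derivative qd x $ 1) (at x within ?T)"
        unfolding has_real_derivative_iff_has_vector_derivative
        by (rule bounded_linear.has_vector_derivative[OF bounded_linear_vec_nth qder[OF x]])
      have d1: "((\<lambda>y. q y $ 1 *\<^sub>R q y) has_vector_derivative (q x $1 *\<^sub>R qd x + qd x $1 *\<^sub>R q x)) (at x within ?T)"
        by (rule has_vector_derivative_scaleR[OF c1d qder[OF x]])
      have d2: "((\<lambda>y. q y $ 1 *\<^sub>R q y - one4) has_vector_derivative (q x $1 *\<^sub>R qd x + qd x $1 *\<^sub>R q x)) (at x within ?T)"
        using has_vector_derivative_diff[OF d1 has_vector_derivative_const[of one4]] by simp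
      have d3: "((\<lambda>y. lam *\<^sub>R (q y $ 1 *\<^sub>R q y - one4)) has_vector_derivative lam *\<^sub>R (q x $1 *\<^sub>R qd x + qd x $1 *\<^sub>R q x)) (at x within ?T)"
        by (rule bounded_linear.has_vector_derivative[OF bounded_linear_scaleR_right d2])
      have "(s has_vector_derivative (qdd x + lam *\<^sub>R (q x $1 *\<^sub>R qd x + qd x $1 *\<^sub>R q x))) (at x within ?T)"
        unfolding s_def[abs_def] sfun_def by (rule has_vector_derivative_add[OF qdder[OF x] d3])
      then show ?thesis unfolding sd_def by (simp add: add.commute)
    qed
    have Vder: "(V has_real_derivative Vd x) (at x within ?T)" if x: "x \<ge> t0" for x
    proof -
      let ?u = "\<lambda>y. transpose (Jm (q y)) *v s y"
      let ?u' = "transpose (Jm (q x)) *v sd x + transpose (Jm (qd x)) *v s x"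
      have pd: "((\<lambda>y. q y \<bullet> s y) has_real_derivative (q x \<bullet> sd x + qd x \<bullet> s x)) (at x within ?T)"
        unfolding has_real_derivative_iff_has_vector_derivative
        by (rule bounded_bilinear.has_vector_derivative[OF bounded_bilinear_inner qder[OF x] sder[OF x]])
      have ud: "(?u has_vector_derivative ?u') (at x within ?T)"
        by (rule bounded_bilinear.has_vector_derivative[OF Jt_bb qder[OF x] sder[OF x]])
      have mud: "((\<lambda>y. M *v ?u y) has_vector_derivative M *v ?u') (at x within ?T)"
        by (rule bounded_linear.has_vector_derivative[OF matrix_vector_mul_bounded_linear ud])
      have rd: "((\<lambda>y. ?u y \<bullet> (M *v ?u y)) has_real_derivative (?u x \<bullet> (M *v ?u') + ?u' \<bullet> (M *v ?u x))) (at x within ?T)"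
        unfolding has_real_derivative_iff_has_vector_derivative
        by (rule bounded_bilinear.has_vector_derivative[OF bounded_bilinear_inner ud mud])
      have sq: "((\<lambda>y. (q y \<bullet> s y)^2) has_real_derivative 2 * (q x \<bullet> s x) * (q x \<bullet> sd x + qd x \<bullet> s x)) (at x within ?T)"
        using DERIV_power[OF pd, of 2] by (simp add: algebra_simps)
      have "(V has_real_derivative (m0 * (2 * (q x \<bullet> s x) * (q x \<bullet> sd x + qd x \<bullet> s x)) + (?u x \<bullet> (M *v ?u') + ?u' \<bullet> (M *v ?u x)))) (at x within ?T)"
        unfolding V_def[abs_def]
        by (intro DERIV_add DERIV_cmult rd sq)
      moreover have "m0 * (2 * (q x \<bullet> s x) * (q x \<bullet> sd x + qd x \<bullet> s x)) + (?u x \<bullet> (M *v ?u') + ?u' \<bullet> (M *v ?u x)) = Vd x"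
      proof -
        have e: "?u' \<bullet> (M *v ?u x) = ?u x \<bullet> (M *v ?u')" by (rule sym_dot[OF Ms])
        show ?thesis unfolding Vd_def e by algebra
      qed
      ultimately show ?thesis by simp
    qed
    have Vd_le: "Vd x \<le> - al * V x" if x: "x \<ge> t0" for x
    proof -
      have "Vd x = -2 * (s x \<bullet> (Kr *v s x))"
        unfolding Vd_def
        by (rule L_key[OF qq[OF x] qqd[OF x] Ms]) (unfold s_def sd_def, rule cl_s[OF eq[OF x]])
      also have "\<dots> \<le> -2 * (kap * (s x \<bullet> s x))" using kap(2)[of "s x"] by simp
      also have "\<dots> \<le> - al * V x"
      proof -
        have "V x \<le> c2 * (s x \<bullet> s x)" unfolding V_def c2_def
          by (rule V_bounds(2)[OF qq[OF x] cM(2) KM m0 cM(1)])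
        then have "al * V x \<le> al * (c2 * (s x \<bullet> s x))" using al by (simp add: mult_left_mono)
        also have "\<dots> = 2 * (kap * (s x \<bullet> s x))" unfolding al_def using c2 by simp
        finally show ?thesis by simp
      qed
      finally show ?thesis .
    qed
    define W where "W x = V x * exp (al * (x - t0))" for x
    have Wder: "(W has_real_derivative (Vd x * exp (al * (x - t0)) + V x * (exp (al * (x - t0)) * al))) (at x within ?T)"
      if x: "x \<ge> t0" for x
    proof -
      have e: "((\<lambda>y. exp (al*(y - t0))) has_real_derivative exp (al*(x-t0)) * al) (at x within ?T)"
        by (auto intro!: derivative_eq_intros)
      show ?thesis unfolding W_def[abs_def] using DERIV_mult[OF Vder[OF x] e] by (simp add: algebra_simps)
    qed
    have Wneg: "Vd x * exp (al * (x - t0)) + V x * (exp (al * (x - t0)) * al) \<le> 0" if x: "x \<ge> t0" for x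
    proof -
      have "Vd x * exp (al * (x - t0)) + V x * (exp (al * (x - t0)) * al) = (Vd x + al * V x) * exp (al * (x - t0))"
        by (simp add: algebra_simps)
      moreover have "Vd x + al * V x \<le> 0" using Vd_le[OF x] by simp
      ultimately show ?thesis by (simp add: mult_nonpos_nonneg)
    qed
    have Wmono: "W t \<le> W t0"
    proof (rule DERIV_nonpos_imp_decreasing_open[OF tt0])
      fix x assume x: "t0 < x" "x < t"
      have "at x within ?T = at x" by (rule at_within_interior) (use x in simp)
      then show "\<exists>y. (W has_real_derivative y) (at x) \<and> y \<le> 0"
        using Wder[of x] Wneg[of x] x by auto
    next
      have "continuous_on ?T W"
        unfolding continuous_on_eq_continuous_within
        using Wder DERIV_continuous by fastforce
      then show "continuous_on {t0..t} W" by (rule continuous_on_subset) auto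
    qed
    have "c1 * (s t \<bullet> s t) \<le> V t" unfolding V_def c1_def
      by (rule V_bounds(1)[OF qq[OF tt0] cM(2) KM m0 cM(1)])
    also have "V t = W t * exp (- al * (t - t0))" unfolding W_def by (simp add: mult.assoc exp_add[symmetric])
    also have "\<dots> \<le> W t0 * exp (- al * (t - t0))" using Wmono by simp
    also have "W t0 = V t0" unfolding W_def by simp
    also have "V t0 \<le> c2 * (s t0 \<bullet> s t0)" unfolding V_def c2_def
      by (rule V_bounds(2)[OF qq[OF order.refl] cM(2) KM m0 cM(1)])
    finally have "c1 * (s t \<bullet> s t) \<le> c2 * (s t0 \<bullet> s t0) * exp (- al * (t - t0))"
      by (simp add: mult_right_mono)
    then have "(norm (s t))^2 \<le> (c2/c1) * (norm (s t0))^2 * exp (- al * (t - t0))"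
      using c1 by (simp add: power2_norm_eq_inner field_simps)
    also have "\<dots> = (sqrt (c2/c1) * norm (s t0) * exp (- (al/2) * (t - t0)))^2"
      using c1 c2 by (simp add: power_mult_distrib real_sqrt_pow2 exp_double[symmetric] power2_eq_square[of "exp _"] mult_exp_exp)
    finally have "norm (s t) \<le> sqrt (c2/c1) * norm (s t0) * exp (- (al/2) * (t - t0))"
      by (rule power2_le_imp_le) (use c1 c2 in simp)
    then show ?thesis unfolding s_def .
  qed
  show ?thesis
    apply (rule exI[of _ "sqrt (c2/c1)"], rule exI[of _ "al/2"])
    using main c1 c2 al by auto
qed

end
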